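(* Let $(p_n)$ be integers diverging to infinity and $(\kappa_n)$ a sequence in $(0,\infty)$ with $\kappa_n=o(p_n)$. Then $\sqrt{p_n\tilde e_{n2}}-1=O(\kappa_n^2/p_n^2)$ as $n\to\infty$.
   Context: For integer $p\ge2$ and $\kappa>0$, $c_{p,\kappa}=1/\int_{-1}^1(1-t^2)^{(p-3)/2}e^{\kappa t}dt$. $\tilde e_{n2}$ is the variance of the distribution on $[-1,1]$ with density $u\mapsto c_{p_n,\kappa_n}(1-u^2)^{(p_n-3)/2}e^{\kappa_nu}$. *)

theory Defs
  imports "HOL-Analysis.Analysis" "HOL-Library.Landau_Symbols"
begin

definition wmf :: "nat \<Rightarrow> real \<Rightarrow> real \<Rightarrow> real" where
  "wmf p \<kappa> t = (1 - t\<^sup>2) powr ((real p - 3) / 2) * exp (\<kappa> * t)"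

definition c_const :: "nat \<Rightarrow> real \<Rightarrow> real" where
  "c_const p \<kappa> = 1 / integral {-1..1} (wmf p \<kappa>)"

definition wdens :: "nat \<Rightarrow> real \<Rightarrow> real \<Rightarrow> real" where
  "wdens p \<kappa> u = c_const p \<kappa> * wmf p \<kappa> u"

definition wmean :: "nat \<Rightarrow> real \<Rightarrow> real" where
  "wmean p \<kappa> = integral {-1..1} (\<lambda>u. u * wdens p \<kappa> u)"

text \<open>Variance of that distribution (the quantity e~_{n2} for p = p_n, kappa = kappa_n).\<close>
definition wvar :: "nat \<Rightarrow> real \<Rightarrow> real" where
  "wvar p \<kappa> = integral {-1..1} (\<lambda>u. (u - wmean p \<kappa>)\<^sup>2 * wdens p \<kappa> u)"

end

theory Submission
  imports Defs
begin


definition gg :: "nat \<Rightarrow> real \<Rightarrow> real \<Rightarrow> real" where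
  "gg p \<kappa> u = \<kappa> * (1 - u\<^sup>2) - (real p - 1) * u"

lemma wmf_cont:
  assumes "p \<ge> 5"
  shows "continuous_on {-1..1} (wmf p \<kappa>)"
  unfolding wmf_def using assms
  by (intro continuous_intros continuous_on_powr') (auto simp: abs_square_le_1)

lemma ibp:
  assumes "p \<ge> 5"
  shows "((\<lambda>u. ((1 - u\<^sup>2) * (real k * (u - m) ^ (k - 1)) + (u - m) ^ k * gg p \<kappa> u) * wmf p \<kappa> u)
          has_integral 0) {-1..1}"
proof -
  define b where "b = (real p - 1) / 2"
  have b: "b \<ge> 2" using assms by (simp add: b_def)
  define F where "F t = (t - m) ^ k * (1 - t\<^sup>2) powr b * exp (\<kappa> * t)" for t
  have "((\<lambda>u. ((1 - u\<^sup>2) * (real k * (u - m) ^ (k - 1)) + (u - m) ^ k * gg p \<kappa> u) * wmf p \<kappa> u)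
          has_integral (F 1 - F (-1))) {-1..1}"
  proof (rule fundamental_theorem_of_calculus_interior)
    show "continuous_on {-1..1} F" unfolding F_def using b
      by (intro continuous_intros continuous_on_powr') (auto simp: abs_square_le_1)
  next
    fix x :: real assume x: "x \<in> {-1<..<1}"
    have pos: "1 - x\<^sup>2 > 0" using x by (simp add: abs_square_less_1 abs_less_iff)
    have h1: "((\<lambda>t. (t - m) ^ k) has_real_derivative real k * (x - m) ^ (k - 1)) (at x)"
      by (auto intro!: derivative_eq_intros)
    have h2: "((\<lambda>t. (1 - t\<^sup>2) powr b) has_real_derivative b * (1 - x\<^sup>2) powr (b - 1) * (- (2 * x))) (at x)"
      using pos by (auto intro!: derivative_eq_intros simp: power2_eq_square)
    have h3: "((\<lambda>t. exp (\<kappa> * t)) has_real_derivative exp (\<kappa> * x) * \<kappa>) (at x)"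
      by (auto intro!: derivative_eq_intros)
    have D: "(F has_real_derivative
       (real k * (x - m) ^ (k - 1) * (1 - x\<^sup>2) powr b + (x - m) ^ k * (b * (1 - x\<^sup>2) powr (b - 1) * (- (2 * x)))) * exp (\<kappa> * x)
       + (x - m) ^ k * (1 - x\<^sup>2) powr b * (exp (\<kappa> * x) * \<kappa>)) (at x)"
      unfolding F_def using DERIV_mult[OF DERIV_mult[OF h1 h2] h3] by (simp add: mult_ac)
    define A where "A = (1 - x\<^sup>2) powr (b - 1)"
    have PA: "(1 - x\<^sup>2) powr b = (1 - x\<^sup>2) * A"
      using pos unfolding A_def by (simp add: powr_diff)
    have bb: "b - 1 = (real p - 3) / 2" by (simp add: b_def field_simps)
    have wm: "wmf p \<kappa> x = A * exp (\<kappa> * x)" unfolding wmf_def A_def bb ..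
    have 2: "2 * b = real p - 1" by (simp add: b_def)
    have eq: "(real k * (x - m) ^ (k - 1) * (1 - x\<^sup>2) powr b + (x - m) ^ k * (b * (1 - x\<^sup>2) powr (b - 1) * (- (2 * x)))) * exp (\<kappa> * x)
       + (x - m) ^ k * (1 - x\<^sup>2) powr b * (exp (\<kappa> * x) * \<kappa>)
       = ((1 - x\<^sup>2) * (real k * (x - m) ^ (k - 1)) + (x - m) ^ k * gg p \<kappa> x) * wmf p \<kappa> x"
      unfolding PA wm gg_def A_def[symmetric] 2[symmetric] by (simp add: algebra_simps)
    show "(F has_vector_derivative ((1 - x\<^sup>2) * (real k * (x - m) ^ (k - 1)) + (x - m) ^ k * gg p \<kappa> x) * wmf p \<kappa> x) (at x)"
      using D unfolding eq has_real_derivative_iff_has_vector_derivative .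
  qed simp
  moreover have "F 1 = 0" "F (-1) = 0" using b by (auto simp: F_def)
  ultimately show ?thesis by simp
qed



lemma alg:
  fixes q k m v t f g :: real
  assumes q: "q \<ge> 4" and k0: "k > 0" and kq: "k \<le> q / 2"
    and E0: "k * (1 - m\<^sup>2) - q * m - k * v = 0"
    and E1: "1 - m\<^sup>2 - v - (2 * k * m + q) * v - k * t = 0"
    and E2: "(k * (1 - m\<^sup>2) - q * m - 4 * m) * v - (2 + 2 * k * m + q) * t - k * f = 0"
    and E3: "3 * (1 - m\<^sup>2) * v + (k * (1 - m\<^sup>2) - q * m - 6 * m) * t - (3 + 2 * k * m + q) * f - k * g = 0"
    and P1: "v \<ge> 0" and P2: "1 - m\<^sup>2 - v \<ge> 0" and P4: "f \<ge> 0"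
    and P3: "m \<ge> 0 \<Longrightarrow> v - t \<ge> 0"
    and P5: "m \<ge> 0 \<Longrightarrow> (2 * m + 1) * v + t \<ge> 0"
    and P6: "m \<ge> 0 \<Longrightarrow> (2 * m + 1) * f + g \<ge> 0"
  shows "\<bar>(q + 1) * v - 1\<bar> \<le> 30 * k\<^sup>2 / (q + 1)\<^sup>2"
proof -
  have qm: "q * m = k * (1 - m\<^sup>2 - v)" using E0 by (simp add: algebra_simps)
  have "q * m \<ge> 0" using qm P2 k0 by simp
  then have m0: "m \<ge> 0" using q by (simp add: zero_le_mult_iff)
  have "k * (1 - m\<^sup>2 - v) \<le> k * 1" using P1 k0 zero_le_power2[of m] by (intro mult_left_mono) linarith+
  then have qmk: "q * m \<le> k" using qm by simp
  have mk: "m \<le> k / q" using qmk q by (simp add: field_simps)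
  have "q * m \<le> q * (1/2)" using qmk kq by simp
  then have mh: "m \<le> 1 / 2" using q by (simp add: mult_le_cancel_left)
  note P3 = P3[OF m0] and P5 = P5[OF m0] and P6 = P6[OF m0]
  have G0: "k * (1 - m\<^sup>2) - q * m = k * v" using E0 by simp
  have kt: "k * (- ((2 * m + 1) * v)) \<le> k * t" using P5 k0 by (intro mult_left_mono) auto
  have "(q - k) * v \<le> (2 * k * m + q) * v + k * t"
    using kt P1 m0 k0 by (simp add: algebra_simps)
  also have "\<dots> = 1 - m\<^sup>2 - v" using E1 by (simp add: algebra_simps)
  also have "\<dots> \<le> 1" using P1 zero_le_power2[of m] by linarith
  finally have qkv: "(q - k) * v \<le> 1" .
  have v2: "v \<le> 2 / q"
  proof -
    have "(q / 2) * v \<le> (q - k) * v" using kq P1 by (intro mult_right_mono) auto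
    then show ?thesis using qkv q by (simp add: field_simps)
  qed
  have kg: "k * (- ((2 * m + 1) * f)) \<le> k * g" using P6 k0 by (intro mult_left_mono) auto
  have E3': "(3 + 2 * k * m + q) * f + k * g = 3 * (1 - m\<^sup>2) * v + (k * v - 6 * m) * t"
  proof -
    have h: "k * (1 - m\<^sup>2) - q * m - 6 * m = k * v - 6 * m" using G0 by simp
    show ?thesis using E3 unfolding h by (simp add: algebra_simps)
  qed
  have "(q - k) * f \<le> (3 + 2 * k * m + q) * f + k * g"
    using kg P4 m0 k0 by (simp add: algebra_simps)
  also have "\<dots> = 3 * (1 - m\<^sup>2) * v + k * v * t - 6 * m * t" using E3' by (simp add: algebra_simps)
  also have "\<dots> \<le> 3 * v + k * v * v + 6 * m * ((2 * m + 1) * v)"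
  proof -
    have a: "3 * (1 - m\<^sup>2) * v \<le> 3 * v" using P1 by (simp add: algebra_simps)
    have b: "k * v * t \<le> k * v * v" using P3 P1 k0 by (intro mult_left_mono) auto
    have c: "6 * m * (- t) \<le> 6 * m * ((2 * m + 1) * v)"
      using P5 m0 by (intro mult_left_mono) auto
    show ?thesis using a b c unfolding mult_minus_right by linarith
  qed
  also have "\<dots> \<le> 9 * v + k * v * v"
  proof -
    have "m * (2 * m + 1) \<le> (1/2) * 2" by (rule mult_mono) (use mh m0 in auto)
    then have "(6 * m * (2 * m + 1)) * v \<le> 6 * v" using P1
      by (intro mult_right_mono) auto
    then show ?thesis by (simp add: mult.assoc)
  qed
  finally have fb0: "(q - k) * f \<le> 9 * v + k * v * v" .
  have kv: "k * v \<le> (q / 2) * (2 / q)" using kq v2 P1 k0 by (intro mult_mono) auto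
  then have kv: "k * v \<le> 1" using q by simp
  have f40: "f \<le> 40 / q\<^sup>2"
  proof -
    have kvv: "(k * v) * v \<le> 1 * v" using kv P1 by (intro mult_right_mono) auto
    have "(q / 2) * f \<le> (q - k) * f" using kq P4 by (intro mult_right_mono) auto
    also have "\<dots> \<le> 10 * v" using fb0 kvv by simp
    also have "\<dots> \<le> 20 / q" using v2 by simp
    finally show ?thesis using q by (simp add: field_simps power2_eq_square)
  qed
  have t52: "\<bar>t\<bar> \<le> 52 * k / q ^ 3"
  proof -
    have E2': "(2 + 2 * k * m + q) * t = k * v * v - 4 * m * v - k * f"
    proof -
      have h: "k * (1 - m\<^sup>2) - q * m - 4 * m = k * v - 4 * m" using G0 by simp
      show ?thesis using E2 unfolding h by (simp add: algebra_simps)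
    qed
    have "\<bar>k * v * v - 4 * m * v - k * f\<bar> \<le> k * v * v + 4 * m * v + k * f"
      using P1 P4 m0 k0 by (simp add: abs_le_iff)
    also have "\<dots> \<le> k * (2/q) * (2/q) + 4 * (k/q) * (2/q) + k * (40 / q\<^sup>2)"
    proof -
      have a: "k * v * v \<le> k * (2/q) * (2/q)" using k0 P1 v2 q by (intro mult_mono) auto
      have b: "4 * m * v \<le> 4 * (k/q) * (2/q)" using m0 P1 v2 mk q k0 by (intro mult_mono) auto
      have c: "k * f \<le> k * (40 / q\<^sup>2)" using k0 f40 by (intro mult_left_mono) auto
      show ?thesis using a b c by linarith
    qed
    also have "\<dots> = 52 * k / q\<^sup>2" by (simp add: field_simps power2_eq_square)
    finally have a: "\<bar>(2 + 2 * k * m + q) * t\<bar> \<le> 52 * k / q\<^sup>2" using E2' by simp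
    have "q * \<bar>t\<bar> \<le> (2 + 2 * k * m + q) * \<bar>t\<bar>" using m0 k0 by (intro mult_right_mono) auto
    also have "\<dots> = \<bar>(2 + 2 * k * m + q) * t\<bar>" using m0 k0 q by (simp add: abs_mult)
    finally have "q * \<bar>t\<bar> \<le> 52 * k / q\<^sup>2" using a by linarith
    then show ?thesis using q by (simp add: field_simps power2_eq_square power3_eq_cube)
  qed
  have E1': "(q + 1) * v - 1 = - m\<^sup>2 - 2 * k * m * v - k * t" using E1 by (simp add: algebra_simps)
  have "\<bar>(q + 1) * v - 1\<bar> \<le> m\<^sup>2 + 2 * k * m * v + k * \<bar>t\<bar>"
  proof -
    have "k * t \<le> k * \<bar>t\<bar>" "k * (- t) \<le> k * \<bar>t\<bar>" using k0 by (intro mult_left_mono; simp)+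
    moreover have "0 \<le> 2 * k * m * v" using m0 k0 P1 by simp
    ultimately show ?thesis unfolding E1' abs_le_iff using zero_le_power2[of m] by linarith
  qed
  also have "\<dots> \<le> (k/q)\<^sup>2 + 2 * k * (k/q) * (2/q) + k * (52 * k / q ^ 3)"
  proof -
    have a: "m\<^sup>2 \<le> (k/q)\<^sup>2" using m0 mk by (intro power_mono) auto
    have b: "2 * k * m * v \<le> 2 * k * (k/q) * (2/q)" using m0 k0 P1 mk v2 q by (intro mult_mono) auto
    have c: "k * \<bar>t\<bar> \<le> k * (52 * k / q ^ 3)" using k0 t52 by (intro mult_left_mono) auto
    show ?thesis using a b c by linarith
  qed
  also have "\<dots> \<le> 18 * k\<^sup>2 / q\<^sup>2"
  proof -
    have "k * (52 * k / q ^ 3) = 52 * k\<^sup>2 / q\<^sup>2 * (1 / q)" by (simp add: field_simps power2_eq_square power3_eq_cube)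
    also have "\<dots> \<le> 52 * k\<^sup>2 / q\<^sup>2 * (1 / 4)" using q by (intro mult_left_mono) (auto simp: field_simps)
    finally have "k * (52 * k / q ^ 3) \<le> 13 * k\<^sup>2 / q\<^sup>2" by simp
    moreover have "(k/q)\<^sup>2 + 2 * k * (k/q) * (2/q) = 5 * k\<^sup>2 / q\<^sup>2" by (simp add: field_simps power2_eq_square)
    ultimately show ?thesis by simp
  qed
  also have "\<dots> \<le> 30 * k\<^sup>2 / (q + 1)\<^sup>2"
  proof -
    have "q * q \<ge> 4 * q" using q by (intro mult_right_mono) auto
    moreover have "(q + 1)\<^sup>2 = q * q + 2 * q + 1" "q\<^sup>2 = q * q" by (simp_all add: power2_eq_square algebra_simps)
    ultimately have "18 * (q + 1)\<^sup>2 \<le> 30 * q\<^sup>2" using q by linarith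
    then have r: "18 / q\<^sup>2 \<le> 30 / (q + 1)\<^sup>2" using q by (simp add: field_simps)
    show ?thesis using mult_right_mono[OF r, of "k\<^sup>2"] by simp
  qed
  finally show ?thesis .
qed


definition pl :: "real \<Rightarrow> real \<Rightarrow> real \<Rightarrow> real \<Rightarrow> real \<Rightarrow> real \<Rightarrow> real \<Rightarrow> real" where
  "pl c0 c1 c2 c3 c4 c5 x = c0 + c1 * x + c2 * x ^ 2 + c3 * x ^ 3 + c4 * x ^ 4 + c5 * x ^ 5"

definition JJ :: "nat \<Rightarrow> real \<Rightarrow> nat \<Rightarrow> real \<Rightarrow> real" where
  "JJ p \<kappa> k m = integral {-1..1} (\<lambda>u. (u - m) ^ k * wmf p \<kappa> u)"

lemma w_nonneg: "0 \<le> wmf p \<kappa> u"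
  unfolding wmf_def by simp

lemma intg:
  assumes "p \<ge> 5" "continuous_on {-1..1} h"
  shows "(\<lambda>u. h u * wmf p \<kappa> u) integrable_on {-1..1}"
  by (intro integrable_continuous_interval continuous_on_mult assms wmf_cont)

lemma intgJ:
  assumes "p \<ge> 5"
  shows "(\<lambda>u. c * ((u - m) ^ k * wmf p \<kappa> u)) integrable_on {-1..1}"
  using intg[OF assms, of "\<lambda>u. c * (u - m) ^ k"]
  by (simp add: mult.assoc continuous_intros)

lemma poly_int:
  assumes "p \<ge> 5"
  shows "integral {-1..1} (\<lambda>u. pl c0 c1 c2 c3 c4 c5 (u - m) * wmf p \<kappa> u)
    = c0 * JJ p \<kappa> 0 m + c1 * JJ p \<kappa> 1 m + c2 * JJ p \<kappa> 2 m + c3 * JJ p \<kappa> 3 m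
      + c4 * JJ p \<kappa> 4 m + c5 * JJ p \<kappa> 5 m"
proof -
  have e: "(\<lambda>u. pl c0 c1 c2 c3 c4 c5 (u - m) * wmf p \<kappa> u) =
    (\<lambda>u. c0 * ((u - m) ^ 0 * wmf p \<kappa> u) + c1 * ((u - m) ^ 1 * wmf p \<kappa> u)
       + c2 * ((u - m) ^ 2 * wmf p \<kappa> u) + c3 * ((u - m) ^ 3 * wmf p \<kappa> u)
       + c4 * ((u - m) ^ 4 * wmf p \<kappa> u) + c5 * ((u - m) ^ 5 * wmf p \<kappa> u))"
    by (simp add: pl_def algebra_simps)
  have h: "\<And>i c. ((\<lambda>u. c * ((u - m) ^ i * wmf p \<kappa> u)) has_integral c * JJ p \<kappa> i m) {-1..1}"
  proof -
    fix i c
    have "((\<lambda>u. (u - m) ^ i * wmf p \<kappa> u) has_integral JJ p \<kappa> i m) {-1..1}"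
      unfolding JJ_def using intgJ[OF assms, of 1 m i \<kappa>] by (simp add: integrable_integral)
    then show "((\<lambda>u. c * ((u - m) ^ i * wmf p \<kappa> u)) has_integral c * JJ p \<kappa> i m) {-1..1}"
      by (rule has_integral_mult_right)
  qed
  show ?thesis unfolding e
    by (intro integral_unique has_integral_add h)
qed

lemma poly_nonneg:
  assumes "p \<ge> 5" "\<And>u. u \<in> {-1..1} \<Longrightarrow> 0 \<le> pl c0 c1 c2 c3 c4 c5 (u - m)"
  shows "0 \<le> c0 * JJ p \<kappa> 0 m + c1 * JJ p \<kappa> 1 m + c2 * JJ p \<kappa> 2 m + c3 * JJ p \<kappa> 3 m
      + c4 * JJ p \<kappa> 4 m + c5 * JJ p \<kappa> 5 m"
  unfolding poly_int[OF assms(1), symmetric]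
proof (rule integral_nonneg)
  show "(\<lambda>u. pl c0 c1 c2 c3 c4 c5 (u - m) * wmf p \<kappa> u) integrable_on {-1..1}"
    by (intro intg assms) (auto simp: pl_def intro!: continuous_intros)
qed (use assms(2) w_nonneg in auto)

lemma poly_ibp:
  assumes "p \<ge> 5"
    and "\<And>u. (1 - u\<^sup>2) * (real k * (u - m) ^ (k - 1)) + (u - m) ^ k * gg p \<kappa> u = pl c0 c1 c2 c3 c4 c5 (u - m)"
  shows "c0 * JJ p \<kappa> 0 m + c1 * JJ p \<kappa> 1 m + c2 * JJ p \<kappa> 2 m + c3 * JJ p \<kappa> 3 m
      + c4 * JJ p \<kappa> 4 m + c5 * JJ p \<kappa> 5 m = 0"
  unfolding poly_int[OF assms(1), symmetric] assms(2)[symmetric]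
  using ibp[OF assms(1), of k m \<kappa>] by (simp add: integral_unique)



lemma norm_lin:
  fixes Z J0 J1 J2 J3 J4 J5 :: real
  assumes "Z > 0" "J0 = Z" "J1 = 0"
  shows "c0 * J0 + c1 * J1 + c2 * J2 + c3 * J3 + c4 * J4 + c5 * J5
    = Z * (c0 + c2 * (J2 / Z) + c3 * (J3 / Z) + c4 * (J4 / Z) + c5 * (J5 / Z))"
  using assms by (simp add: field_simps)

lemma Z_pos:
  assumes "p \<ge> 5" "\<kappa> > 0"
  shows "integral {-1..1} (wmf p \<kappa>) > 0"
proof -
  define a where "a = (real p - 3) / 2"
  have a0: "a \<ge> 0" using assms by (simp add: a_def)
  define c0 where "c0 = (3/4) powr a * exp (- \<kappa> / 2)"
  have c0: "c0 > 0" by (simp add: c0_def)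
  have cont: "continuous_on {-1..1} (wmf p \<kappa>)" by (rule wmf_cont[OF assms(1)])
  have int1: "wmf p \<kappa> integrable_on {-1..1}" by (rule integrable_continuous_interval[OF cont])
  have int2: "wmf p \<kappa> integrable_on {-1/2..1/2}"
    by (rule integrable_on_subinterval[OF int1]) auto
  have "c0 = integral {-1/2..1/2::real} (\<lambda>u. c0)" by simp
  also have "\<dots> \<le> integral {-1/2..1/2} (wmf p \<kappa>)"
  proof (rule integral_le[OF _ int2])
    fix u :: real assume u: "u \<in> {-1/2..1/2}"
    have u2: "u\<^sup>2 \<le> 1/4"
    proof -
      have "\<bar>u\<bar> \<le> 1/2" using u by auto
      then have "\<bar>u\<bar>\<^sup>2 \<le> (1/2)\<^sup>2" by (intro power_mono) auto
      then show ?thesis by (simp add: power2_eq_square)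
    qed
    have "(3/4) powr a \<le> (1 - u\<^sup>2) powr a" using u2 a0 by (intro powr_mono2) auto
    moreover have "exp (- \<kappa> / 2) \<le> exp (\<kappa> * u)"
    proof -
      have "\<kappa> * (-1/2) \<le> \<kappa> * u" using u assms by (intro mult_left_mono) auto
      then show ?thesis by simp
    qed
    ultimately show "c0 \<le> wmf p \<kappa> u" unfolding c0_def wmf_def a_def[symmetric]
      by (intro mult_mono) auto
  qed (auto intro: integrable_continuous_interval continuous_intros)
  also have "\<dots> \<le> integral {-1..1} (wmf p \<kappa>)"
    by (rule integral_subset_le[OF _ int2 int1]) (auto simp: w_nonneg)
  finally show ?thesis using c0 by simp
qed

lemma main_est:
  assumes p5: "p \<ge> 5" and k0: "\<kappa> > 0" and kq: "\<kappa> \<le> (real p - 1) / 2"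
  shows "\<bar>real p * wvar p \<kappa> - 1\<bar> \<le> 30 * \<kappa>\<^sup>2 / (real p)\<^sup>2"
proof -
  define Z where "Z = integral {-1..1} (wmf p \<kappa>)"
  have Z: "Z > 0" unfolding Z_def by (rule Z_pos[OF p5 k0])
  define m where "m = wmean p \<kappa>"
  define q where "q = real p - 1"
  have cc: "c_const p \<kappa> = 1 / Z" by (simp add: c_const_def Z_def)
  have intu: "(\<lambda>u. u * wmf p \<kappa> u) integrable_on {-1..1}"
    by (intro intg p5 continuous_intros)
  have intw: "wmf p \<kappa> integrable_on {-1..1}"
    using intg[OF p5, of "\<lambda>_. 1"] by simp
  have mdef: "m = integral {-1..1} (\<lambda>u. u * wmf p \<kappa> u) / Z"
  proof -
    have "m = integral {-1..1} (\<lambda>u. (1 / Z) * (u * wmf p \<kappa> u))"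
      unfolding m_def wmean_def wdens_def cc by (simp add: mult_ac)
    then show ?thesis by simp
  qed
  have J0: "JJ p \<kappa> 0 m = Z" by (simp add: JJ_def Z_def)
  have J1: "JJ p \<kappa> 1 m = 0"
  proof -
    have "JJ p \<kappa> 1 m = integral {-1..1} (\<lambda>u. u * wmf p \<kappa> u - m * wmf p \<kappa> u)"
      unfolding JJ_def by (simp add: algebra_simps)
    also have "\<dots> = integral {-1..1} (\<lambda>u. u * wmf p \<kappa> u) - m * Z"
    proof -
      have "(\<lambda>u. m * wmf p \<kappa> u) integrable_on {-1..1}" using integrable_on_cmult_left[OF intw, of m] by simp
      then show ?thesis using intu by (simp add: Henstock_Kurzweil_Integration.integral_diff Z_def)
    qed
    also have "\<dots> = 0" using Z by (simp add: mdef)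
    finally show ?thesis .
  qed
  have wv: "wvar p \<kappa> = JJ p \<kappa> 2 m / Z"
  proof -
    have "wvar p \<kappa> = integral {-1..1} (\<lambda>u. (1 / Z) * ((u - m) ^ 2 * wmf p \<kappa> u))"
      unfolding wvar_def wdens_def cc m_def by (simp add: mult_ac)
    then show ?thesis by (simp add: JJ_def)
  qed
  define v where "v = JJ p \<kappa> 2 m / Z"
  define t where "t = JJ p \<kappa> 3 m / Z"
  define f where "f = JJ p \<kappa> 4 m / Z"
  define g where "g = JJ p \<kappa> 5 m / Z"
  note NL = norm_lin[OF Z J0 J1]
  define G0 where "G0 = \<kappa> * (1 - m\<^sup>2) - q * m"
  define G1 where "G1 = - (2 * \<kappa> * m + q)"
  define G2 where "G2 = - \<kappa>"
  have ggx: "gg p \<kappa> u = G0 + G1 * (u - m) + G2 * (u - m)\<^sup>2" for u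
    unfolding gg_def G0_def G1_def G2_def q_def by (simp add: algebra_simps power2_eq_square)
  have omu: "1 - u\<^sup>2 = (1 - m\<^sup>2) - 2 * m * (u - m) - (u - m)\<^sup>2" for u :: real
    by (simp add: algebra_simps power2_eq_square)
  have e0: "G0 + G2 * v = 0"
  proof -
    have "G0 * JJ p \<kappa> 0 m + G1 * JJ p \<kappa> 1 m + G2 * JJ p \<kappa> 2 m + 0 * JJ p \<kappa> 3 m
      + 0 * JJ p \<kappa> 4 m + 0 * JJ p \<kappa> 5 m = 0"
      by (rule poly_ibp[OF p5, where k = 0]) (simp add: ggx pl_def)
    then show ?thesis unfolding NL using Z by (simp add: v_def t_def f_def g_def)
  qed
  have e1: "(1 - m\<^sup>2) + (-1 + G1) * v + G2 * t = 0"
  proof -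
    have "(1 - m\<^sup>2) * JJ p \<kappa> 0 m + (-2 * m + G0) * JJ p \<kappa> 1 m + (-1 + G1) * JJ p \<kappa> 2 m + G2 * JJ p \<kappa> 3 m
      + 0 * JJ p \<kappa> 4 m + 0 * JJ p \<kappa> 5 m = 0"
      by (rule poly_ibp[OF p5, where k = 1]) (simp add: ggx pl_def algebra_simps power2_eq_square power3_eq_cube)
    then show ?thesis unfolding NL using Z by (simp add: v_def t_def f_def g_def)
  qed
  have e2: "(-4 * m + G0) * v + (-2 + G1) * t + G2 * f = 0"
  proof -
    have "0 * JJ p \<kappa> 0 m + (2 * (1 - m\<^sup>2)) * JJ p \<kappa> 1 m + (-4 * m + G0) * JJ p \<kappa> 2 m + (-2 + G1) * JJ p \<kappa> 3 m
      + G2 * JJ p \<kappa> 4 m + 0 * JJ p \<kappa> 5 m = 0"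
      by (rule poly_ibp[OF p5, where k = 2]) (simp add: ggx pl_def algebra_simps eval_nat_numeral)
    then show ?thesis unfolding NL using Z by (simp add: v_def t_def f_def g_def)
  qed
  have e3: "3 * (1 - m\<^sup>2) * v + (-6 * m + G0) * t + (-3 + G1) * f + G2 * g = 0"
  proof -
    have "0 * JJ p \<kappa> 0 m + 0 * JJ p \<kappa> 1 m + (3 * (1 - m\<^sup>2)) * JJ p \<kappa> 2 m + (-6 * m + G0) * JJ p \<kappa> 3 m
      + (-3 + G1) * JJ p \<kappa> 4 m + G2 * JJ p \<kappa> 5 m = 0"
      by (rule poly_ibp[OF p5, where k = 3]) (simp add: ggx pl_def algebra_simps eval_nat_numeral)
    then show ?thesis unfolding NL using Z by (simp add: v_def t_def f_def g_def)
  qed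
  have NN: "0 \<le> c0 + c2 * v + c3 * t + c4 * f + c5 * g"
    if "\<And>u. u \<in> {-1..1} \<Longrightarrow> 0 \<le> pl c0 c1 c2 c3 c4 c5 (u - m)" for c0 c1 c2 c3 c4 c5
    using poly_nonneg[OF p5 that, where \<kappa> = \<kappa>] unfolding NL using Z
    by (simp add: zero_le_mult_iff v_def t_def f_def g_def)
  have P1: "v \<ge> 0" using NN[of 0 0 1 0 0 0] by (simp add: pl_def)
  have P4: "f \<ge> 0" using NN[of 0 0 0 0 1 0] by (simp add: pl_def)
  have P2: "1 - m\<^sup>2 - v \<ge> 0"
  proof -
    have "0 \<le> (1 - m\<^sup>2) + (-1) * v + 0 * t + 0 * f + 0 * g"
    proof (rule NN[of _ "-2 * m"])
      fix u :: real assume "u \<in> {-1..1}"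
      then have "0 \<le> 1 - u\<^sup>2" by (simp add: abs_square_le_1 abs_le_iff)
      moreover have "pl (1 - m\<^sup>2) (-2 * m) (-1) 0 0 0 (u - m) = 1 - u\<^sup>2"
        by (simp add: pl_def algebra_simps power2_eq_square)
      ultimately show "0 \<le> pl (1 - m\<^sup>2) (-2 * m) (-1) 0 0 0 (u - m)" by simp
    qed
    then show ?thesis by simp
  qed
  have P3: "v - t \<ge> 0" if m0: "m \<ge> 0"
  proof -
    have "0 \<le> 0 + 1 * v + (-1) * t + 0 * f + 0 * g"
    proof (rule NN[of _ 0])
      fix u :: real assume "u \<in> {-1..1}"
      then have "0 \<le> (u - m)\<^sup>2 * (1 - (u - m))" using m0 by (intro mult_nonneg_nonneg) auto
      then show "0 \<le> pl 0 0 1 (-1) 0 0 (u - m)"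
        by (simp add: pl_def algebra_simps power2_eq_square power3_eq_cube)
    qed
    then show ?thesis by simp
  qed
  have P5: "(2 * m + 1) * v + t \<ge> 0" if m0: "m \<ge> 0"
  proof -
    have "0 \<le> 0 + (2 * m + 1) * v + 1 * t + 0 * f + 0 * g"
    proof (rule NN[of _ 0])
      fix u :: real assume "u \<in> {-1..1}"
      then have "0 \<le> (u - m)\<^sup>2 * ((u - m) + 2 * m + 1)" using m0 by (intro mult_nonneg_nonneg) auto
      then show "0 \<le> pl 0 0 (2 * m + 1) 1 0 0 (u - m)"
        by (simp add: pl_def algebra_simps power2_eq_square power3_eq_cube)
    qed
    then show ?thesis by simp
  qed
  have P6: "(2 * m + 1) * f + g \<ge> 0" if m0: "m \<ge> 0"
  proof -
    have "0 \<le> 0 + 0 * v + 0 * t + (2 * m + 1) * f + 1 * g"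
    proof (rule NN[of _ 0])
      fix u :: real assume "u \<in> {-1..1}"
      then have "0 \<le> (u - m) ^ 4 * ((u - m) + 2 * m + 1)" using m0 by (intro mult_nonneg_nonneg) auto
      then show "0 \<le> pl 0 0 0 0 (2 * m + 1) 1 (u - m)"
        by (simp add: pl_def algebra_simps eval_nat_numeral)
    qed
    then show ?thesis by simp
  qed
  have "\<bar>(q + 1) * v - 1\<bar> \<le> 30 * \<kappa>\<^sup>2 / (q + 1)\<^sup>2"
  proof (rule alg[where g = g])
    show "q \<ge> 4" "\<kappa> \<le> q / 2" using p5 kq by (auto simp: q_def)
    show "\<kappa> * (1 - m\<^sup>2) - q * m - \<kappa> * v = 0" using e0 by (simp add: G0_def G2_def)
    show "1 - m\<^sup>2 - v - (2 * \<kappa> * m + q) * v - \<kappa> * t = 0" using e1 by (simp add: G1_def G2_def algebra_simps)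
    show "(\<kappa> * (1 - m\<^sup>2) - q * m - 4 * m) * v - (2 + 2 * \<kappa> * m + q) * t - \<kappa> * f = 0"
      using e2 by (simp add: G0_def G1_def G2_def algebra_simps)
    show "3 * (1 - m\<^sup>2) * v + (\<kappa> * (1 - m\<^sup>2) - q * m - 6 * m) * t - (3 + 2 * \<kappa> * m + q) * f - \<kappa> * g = 0"
      using e3 by (simp add: G0_def G1_def G2_def algebra_simps)
  qed (use k0 P1 P2 P3 P4 P5 P6 in auto)
  moreover have "q + 1 = real p" by (simp add: q_def)
  ultimately show ?thesis by (simp add: wv v_def)
qed



lemma sqrt_close:
  fixes y :: real
  assumes "\<bar>y - 1\<bar> \<le> 1/2"
  shows "\<bar>sqrt y - 1\<bar> \<le> \<bar>y - 1\<bar>"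
proof -
  have y0: "y \<ge> 0" using assms unfolding abs_le_iff by linarith
  have "y - 1 = (sqrt y - 1) * (sqrt y + 1)" using y0 by (simp add: algebra_simps)
  moreover have "\<bar>sqrt y + 1\<bar> = sqrt y + 1" using y0 by (intro abs_of_nonneg) simp
  ultimately have "\<bar>y - 1\<bar> = \<bar>sqrt y - 1\<bar> * (sqrt y + 1)" by (metis abs_mult)
  moreover have "\<bar>sqrt y - 1\<bar> * 1 \<le> \<bar>sqrt y - 1\<bar> * (sqrt y + 1)" using y0 by (intro mult_left_mono) auto
  ultimately show ?thesis by simp
qed

theorem lemmaA6:
  fixes p :: "nat \<Rightarrow> nat" and \<kappa> :: "nat \<Rightarrow> real"
  assumes "\<And>n. p n \<ge> 2"
    and "filterlim p at_top sequentially"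
    and "\<And>n. \<kappa> n > 0"
    and "\<kappa> \<in> o[sequentially](\<lambda>n. real (p n))"
  shows "(\<lambda>n. sqrt (real (p n) * wvar (p n) (\<kappa> n)) - 1)
           \<in> O[sequentially](\<lambda>n. (\<kappa> n)\<^sup>2 / (real (p n))\<^sup>2)"
proof (rule bigoI)
  have ev1: "eventually (\<lambda>n. p n \<ge> 5) sequentially"
    using assms(2) by (simp add: filterlim_at_top)
  have ev2: "eventually (\<lambda>n. norm (\<kappa> n) \<le> (1/8) * norm (real (p n))) sequentially"
    using landau_o.smallD[OF assms(4), of "1/8"] by simp
  show "eventually (\<lambda>n. norm (sqrt (real (p n) * wvar (p n) (\<kappa> n)) - 1)
      \<le> 30 * norm ((\<kappa> n)\<^sup>2 / (real (p n))\<^sup>2)) sequentially"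
    using ev1 ev2
  proof eventually_elim
    case (elim n)
    define P where "P = real (p n)"
    define k where "k = \<kappa> n"
    have k0: "k > 0" using assms(3) by (simp add: k_def)
    have P5: "P \<ge> 5" using elim by (simp add: P_def)
    have kP: "k \<le> P / 8" using elim k0 by (simp add: P_def k_def)
    have kq: "\<kappa> n \<le> (real (p n) - 1) / 2" using kP P5 unfolding P_def k_def by simp
    have est: "\<bar>P * wvar (p n) k - 1\<bar> \<le> 30 * k\<^sup>2 / P\<^sup>2"
      using main_est[OF elim(1) assms(3) kq] by (simp add: P_def k_def)
    have "k / P \<le> 1 / 8" using kP P5 by (simp add: field_simps)
    then have "(k / P)\<^sup>2 \<le> (1/8)\<^sup>2" using k0 P5 by (intro power_mono) auto
    then have "30 * k\<^sup>2 / P\<^sup>2 \<le> 30 * (1/8)\<^sup>2" by (simp add: power_divide)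
    moreover have "30 * (1/8::real)\<^sup>2 \<le> 1/2" by (simp add: power2_eq_square)
    ultimately have "\<bar>P * wvar (p n) k - 1\<bar> \<le> 1/2" using est by linarith
    then have "\<bar>sqrt (P * wvar (p n) k) - 1\<bar> \<le> 30 * k\<^sup>2 / P\<^sup>2"
      using sqrt_close est by (meson order_trans)
    then show ?case by (simp add: P_def k_def)
  qed
qed

end
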